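(* Let $G$ be a group, let $\tau,\rho\in\mathrm{Aut}(G)$ and $\sigma\in\mathrm{End}(G)$ be such that $\rho\circ\tau=\tau\circ\rho$, $\rho\circ\sigma=\sigma\circ\rho$, and for all $y,z\in G$ \[\tau(\sigma(y))\,\sigma(z)=\tau(\sigma(\rho(z)))\,\sigma(\tau(y))\,\sigma(\sigma(z)).\] Define $B:G\times G\to G\times G$ by $B(x,y)=(\tau(y)\sigma(x),\,\rho(x))$. Then $(G,B)$ is a birack, with kink map given by $\pi(x)=\tau(\rho(x))\,\sigma(x)$.
   Context: Let $X$ be a set. A map $B:X\times X\to X\times X$, written $B=(B_1,B_2)$, is strongly invertible if: (i) $B$ is a bijection; (ii) there is a unique invertible map $S:X\times X\to X\times X$ (the sideways map) with $S(B_1(x,y),x)=(B_2(x,y),y)$ for all $x,y$; (iii) writing $S=(S_1,S_2)$, $S^{-1}=(S^{-1}_1,S^{-1}_2)$ and $\Delta(x)=(x,x)$, each of $S_1\circ\Delta$, $S_2\circ\Delta$, $S^{-1}_1\circ\Delta$, $S^{-1}_2\circ\Delta$ is a bijection $X\to X$. A birack is a pair $(X,B)$ with $B$ strongly invertible satisfying the set-theoretic Yang–Baxter equation $(B\times\mathrm{Id})(\mathrm{Id}\times B)(B\times\mathrm{Id})=(\mathrm{Id}\times B)(B\times\mathrm{Id})(\mathrm{Id}\times B)$. Its kink map is $\pi=S^{-1}_1\circ\Delta\circ(S^{-1}_2\circ\Delta)^{-1}$. Group multiplication in $G$ is written by juxtaposition. *)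

theory Defs
  imports Main
begin

text \<open>A group is modelled by a type of class group_add (not necessarily commutative);
  the group multiplication (juxtaposition in the paper) is written +.\<close>

definition group_hom :: "('a::group_add \<Rightarrow> 'a) \<Rightarrow> bool" where
  "group_hom f \<longleftrightarrow> (\<forall>a b. f (a + b) = f a + f b)"

definition group_aut :: "('a::group_add \<Rightarrow> 'a) \<Rightarrow> bool" where
  "group_aut f \<longleftrightarrow> group_hom f \<and> bij f"

definition is_sideways :: "('a \<times> 'a \<Rightarrow> 'a \<times> 'a) \<Rightarrow> ('a \<times> 'a \<Rightarrow> 'a \<times> 'a) \<Rightarrow> bool" where
  "is_sideways B S \<longleftrightarrow> bij S \<and> (\<forall>x y. S (fst (B (x, y)), x) = (snd (B (x, y)), y))"

definition sideways :: "('a \<times> 'a \<Rightarrow> 'a \<times> 'a) \<Rightarrow> ('a \<times> 'a \<Rightarrow> 'a \<times> 'a)" where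
  "sideways B = (THE S. is_sideways B S)"

definition strongly_invertible :: "('a \<times> 'a \<Rightarrow> 'a \<times> 'a) \<Rightarrow> bool" where
  "strongly_invertible B \<longleftrightarrow>
     bij B \<and> (\<exists>!S. is_sideways B S) \<and>
     (let S = sideways B in
        bij (\<lambda>x. fst (S (x, x))) \<and> bij (\<lambda>x. snd (S (x, x))) \<and>
        bij (\<lambda>x. fst (inv S (x, x))) \<and> bij (\<lambda>x. snd (inv S (x, x))))"

definition B_Id :: "('a \<times> 'a \<Rightarrow> 'a \<times> 'a) \<Rightarrow> 'a \<times> 'a \<times> 'a \<Rightarrow> 'a \<times> 'a \<times> 'a" where
  "B_Id B = (\<lambda>(x, y, z). (fst (B (x, y)), snd (B (x, y)), z))"

definition Id_B :: "('a \<times> 'a \<Rightarrow> 'a \<times> 'a) \<Rightarrow> 'a \<times> 'a \<times> 'a \<Rightarrow> 'a \<times> 'a \<times> 'a" where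
  "Id_B B = (\<lambda>(x, y, z). (x, fst (B (y, z)), snd (B (y, z))))"

definition yang_baxter :: "('a \<times> 'a \<Rightarrow> 'a \<times> 'a) \<Rightarrow> bool" where
  "yang_baxter B \<longleftrightarrow> B_Id B \<circ> Id_B B \<circ> B_Id B = Id_B B \<circ> B_Id B \<circ> Id_B B"

definition birack :: "('a \<times> 'a \<Rightarrow> 'a \<times> 'a) \<Rightarrow> bool" where
  "birack B \<longleftrightarrow> strongly_invertible B \<and> yang_baxter B"

definition kink :: "('a \<times> 'a \<Rightarrow> 'a \<times> 'a) \<Rightarrow> 'a \<Rightarrow> 'a" where
  "kink B = (let S = sideways B in
     (\<lambda>x. fst (inv S (x, x))) \<circ> inv (\<lambda>x. snd (inv S (x, x))))"

end

theory Submission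
  imports Defs
begin

lemma hom_zero: "group_hom (f::'a::group_add \<Rightarrow> 'a) \<Longrightarrow> f 0 = 0"
proof -
  assume h: "group_hom f"
  have "f 0 = f 0 + f 0" using h unfolding group_hom_def by (metis add_0)
  thus ?thesis by (metis add.right_neutral add_left_cancel)
qed

lemma hom_minus: "group_hom (f::'a::group_add \<Rightarrow> 'a) \<Longrightarrow> f (- a) = - f a"
proof -
  assume h: "group_hom f"
  have "f (a + - a) = f a + f (- a)" using h unfolding group_hom_def by blast
  hence "f a + f (- a) = f (a + - a)" by (rule sym)
  also have "\<dots> = 0" using hom_zero[OF h] by simp
  finally have "- f a = f (- a)" by (rule minus_unique)
  thus ?thesis by simp
qed

lemma hom_diff: "group_hom (f::'a::group_add \<Rightarrow> 'a) \<Longrightarrow> f (a - b) = f a - f b"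
proof -
  assume h: "group_hom f"
  have "f (a + - b) = f a + f (- b)" using h unfolding group_hom_def by blast
  thus ?thesis using hom_minus[OF h, of b] by (simp only: diff_conv_add_uminus)
qed

lemma hom_inv: "group_hom (f::'a::group_add \<Rightarrow> 'a) \<Longrightarrow> (\<And>x. fi (f x) = x) \<Longrightarrow> (\<And>y. f (fi y) = y)
   \<Longrightarrow> group_hom fi"
proof -
  assume h: "group_hom f" and a: "\<And>x. fi (f x) = x" and b: "\<And>y. f (fi y) = y"
  have "fi (x + y) = fi x + fi y" for x y
  proof -
    have "fi (x + y) = fi (f (fi x) + f (fi y))" by (simp add: b)
    also have "\<dots> = fi (f (fi x + fi y))" using h unfolding group_hom_def by simp
    finally show ?thesis by (simp add: a)
  qed
  thus ?thesis unfolding group_hom_def by blast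
qed

lemma bij_by_inv: "(\<And>x. g (f x) = x) \<Longrightarrow> (\<And>y. f (g y) = y) \<Longrightarrow> bij f"
  by (rule o_bij[of g]) (auto simp: fun_eq_iff)

lemma inv_by_inv: "(\<And>x. g (f x) = x) \<Longrightarrow> (\<And>y. f (g y) = y) \<Longrightarrow> inv f = g"
  by (rule inv_equality) auto

theorem mainTheorem6:
  fixes \<tau> \<rho> \<sigma> :: "'a::group_add \<Rightarrow> 'a"
  assumes "group_aut \<tau>" and "group_aut \<rho>" and "group_hom \<sigma>"
    and "\<rho> \<circ> \<tau> = \<tau> \<circ> \<rho>" and "\<rho> \<circ> \<sigma> = \<sigma> \<circ> \<rho>"
    and "\<forall>y z. \<tau> (\<sigma> y) + \<sigma> z = \<tau> (\<sigma> (\<rho> z)) + \<sigma> (\<tau> y) + \<sigma> (\<sigma> z)"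
  shows "birack (\<lambda>(x, y). (\<tau> y + \<sigma> x, \<rho> x)) \<and>
         kink (\<lambda>(x, y). (\<tau> y + \<sigma> x, \<rho> x)) = (\<lambda>x. \<tau> (\<rho> x) + \<sigma> x)"
proof -
  define B where "B = (\<lambda>(x, y). (\<tau> y + \<sigma> x, \<rho> x))"
  define ti where "ti = inv \<tau>"
  define ri where "ri = inv \<rho>"
  have ht: "group_hom \<tau>" and bt: "bij \<tau>" using assms(1) by (auto simp: group_aut_def)
  have hr: "group_hom \<rho>" and br: "bij \<rho>" using assms(2) by (auto simp: group_aut_def)
  have hs: "group_hom \<sigma>" by fact
  have t1: "\<tau> (ti a) = a" for a unfolding ti_def by (rule surj_f_inv_f[OF bij_is_surj[OF bt]])
  have t2: "ti (\<tau> a) = a" for a unfolding ti_def by (rule inv_f_f[OF bij_is_inj[OF bt]])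
  have r1: "\<rho> (ri a) = a" for a unfolding ri_def by (rule surj_f_inv_f[OF bij_is_surj[OF br]])
  have r2: "ri (\<rho> a) = a" for a unfolding ri_def by (rule inv_f_f[OF bij_is_inj[OF br]])
  have rt: "\<rho> (\<tau> a) = \<tau> (\<rho> a)" for a using assms(4) by (metis comp_apply)
  have rs: "\<rho> (\<sigma> a) = \<sigma> (\<rho> a)" for a using assms(5) by (metis comp_apply)
  have s0: "\<sigma> 0 = 0" by (rule hom_zero[OF hs])
  have t0: "\<tau> 0 = 0" by (rule hom_zero[OF ht])
  have r0: "\<rho> 0 = 0" by (rule hom_zero[OF hr])
  have ts: "\<tau> (\<sigma> a) = \<sigma> (\<tau> a)" for a using assms(6)[rule_format, of a 0] by (simp add: s0 t0 r0)
  define g where "g = (\<lambda>x. \<tau> (\<rho> x))"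
  define gi where "gi = (\<lambda>x. ri (ti x))"
  have g1: "g (gi a) = a" for a unfolding g_def gi_def by (simp add: r1 t1)
  have g2: "gi (g a) = a" for a unfolding g_def gi_def by (simp add: r2 t2)
  have hg: "group_hom g" using ht hr unfolding g_def group_hom_def by simp
  have gs: "\<sigma> (g a) = g (\<sigma> a)" for a unfolding g_def by (simp add: ts rs)
  have key: "\<sigma> z - \<sigma> (\<sigma> z) = g (\<sigma> z)" for z
  proof -
    have "\<sigma> z = \<tau> (\<sigma> (\<rho> z)) + \<sigma> (\<sigma> z)" using assms(6)[rule_format, of 0 z] by (simp add: s0 t0)
    thus ?thesis unfolding g_def by (simp add: diff_eq_eq rs)
  qed
  have key2: "\<sigma> (gi a) - \<sigma> (\<sigma> (gi a)) = \<sigma> a" for a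
    using key[of "gi a"] gs[of "gi a"] g1 by simp
  have hsd: "\<sigma> (a - b) = \<sigma> a - \<sigma> b" for a b by (rule hom_diff[OF hs])
  have hsa: "\<sigma> (a + b) = \<sigma> a + \<sigma> b" for a b using hs unfolding group_hom_def by simp
  have hga: "g (a + b) = g a + g b" for a b using hg unfolding group_hom_def by simp
  have hgd: "g (a - b) = g a - g b" for a b by (rule hom_diff[OF hg])
  have hgi: "group_hom gi" by (rule hom_inv[OF hg g2 g1])
  have gid: "gi (a - b) = gi a - gi b" for a b by (rule hom_diff[OF hgi])
  have gis: "gi (\<sigma> a) = \<sigma> (gi a)" for a
  proof -
    have "gi (\<sigma> a) = gi (\<sigma> (g (gi a)))" by (simp add: g1)
    also have "\<dots> = \<sigma> (gi a)" by (simp add: gs g2)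
    finally show ?thesis .
  qed
  have hti: "group_hom ti" by (rule hom_inv[OF ht t2 t1])
  have htd: "ti (a - b) = ti a - ti b" for a b by (rule hom_diff[OF hti])
  have bf: "bij (\<lambda>x. x - \<sigma> x)"
  proof (rule bij_by_inv[of "\<lambda>a. a + \<sigma> (gi a)"])
    fix x
    have e1: "gi (x - \<sigma> x) = gi x - \<sigma> (gi x)" by (simp add: gid gis)
    have e2: "\<sigma> (gi (x - \<sigma> x)) = \<sigma> (gi x) - \<sigma> (\<sigma> (gi x))" unfolding e1 by (rule hsd)
    have "x - \<sigma> x + \<sigma> (gi (x - \<sigma> x)) = x - \<sigma> x + \<sigma> x" unfolding e2 key2 ..
    thus "x - \<sigma> x + \<sigma> (gi (x - \<sigma> x)) = x" by simp
  next
    fix a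
    have "\<sigma> (a + \<sigma> (gi a)) = \<sigma> a + \<sigma> (\<sigma> (gi a))" by (rule hsa)
    hence "(a + \<sigma> (gi a)) - \<sigma> (a + \<sigma> (gi a)) = a + (\<sigma> (gi a) - \<sigma> (\<sigma> (gi a))) - \<sigma> a"
      by (simp only: diff_conv_add_uminus add.assoc minus_add)
    also have "\<dots> = a" unfolding key2 by simp
    finally show "(a + \<sigma> (gi a)) - \<sigma> (a + \<sigma> (gi a)) = a" .
  qed
  have bpi: "bij (\<lambda>x. g x + \<sigma> x)"
  proof (rule bij_by_inv[of "\<lambda>y. gi (y - \<sigma> y)"])
    fix x
    have "\<sigma> (g x + \<sigma> x) = g (\<sigma> x) + \<sigma> (\<sigma> x)" by (simp only: hsa gs)
    hence "g x + \<sigma> x - \<sigma> (g x + \<sigma> x) = g x + (\<sigma> x - \<sigma> (\<sigma> x)) - g (\<sigma> x)"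
      by (simp only: diff_conv_add_uminus add.assoc minus_add)
    also have "\<dots> = g x" unfolding key by simp
    finally show "gi (g x + \<sigma> x - \<sigma> (g x + \<sigma> x)) = x" by (simp only: g2)
  next
    fix y
    have e1: "gi (y - \<sigma> y) = gi y - \<sigma> (gi y)" by (simp add: gid gis)
    have e2: "\<sigma> (gi (y - \<sigma> y)) = \<sigma> (gi y) - \<sigma> (\<sigma> (gi y))" unfolding e1 by (rule hsd)
    have e3: "g (gi (y - \<sigma> y)) = y - \<sigma> y" by (rule g1)
    have "g (gi (y - \<sigma> y)) + \<sigma> (gi (y - \<sigma> y)) = y - \<sigma> y + \<sigma> y" unfolding e2 e3 key2 ..
    thus "g (gi (y - \<sigma> y)) + \<sigma> (gi (y - \<sigma> y)) = y" by simp
  qed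
  define S where "S = (\<lambda>(a, x). (\<rho> x, ti (a - \<sigma> x)))"
  define Si where "Si = (\<lambda>(u, y). (\<tau> y + \<sigma> (ri u), ri u))"
  have SSi: "S (Si p) = p" for p by (cases p) (simp add: S_def Si_def r1 t2)
  have SiS: "Si (S p) = p" for p by (cases p) (simp add: S_def Si_def r2 t1)
  have bS: "bij S" by (rule bij_by_inv[OF SiS SSi])
  have iS: "inv S = Si" by (rule inv_by_inv[OF SiS SSi])
  have isS: "is_sideways B S" unfolding is_sideways_def using bS
    by (simp add: B_def S_def t2)
  have uniq: "S' = S" if "is_sideways B S'" for S'
  proof (rule ext)
    fix p :: "'a \<times> 'a"
    obtain a x where p: "p = (a, x)" by (cases p)
    have "S' (fst (B (x, ti (a - \<sigma> x))), x) = (snd (B (x, ti (a - \<sigma> x))), ti (a - \<sigma> x))"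
      using that unfolding is_sideways_def by blast
    thus "S' p = S p" by (simp add: p B_def S_def t1)
  qed
  have ex1: "\<exists>!S. is_sideways B S" using isS uniq by blast
  have sw: "sideways B = S" unfolding sideways_def using isS uniq by (rule the_equality)
  have bB: "bij B"
    by (rule bij_by_inv[of "\<lambda>(u, v). (ri v, ti (u - \<sigma> (ri v)))"])
       (auto simp: B_def r1 r2 t1 t2)
  have d1: "bij (\<lambda>x. fst (S (x, x)))" using br by (simp add: S_def)
  have d2: "bij (\<lambda>x. snd (S (x, x)))"
  proof -
    have "(\<lambda>x. snd (S (x, x))) = ti \<circ> (\<lambda>x. x - \<sigma> x)" by (simp add: S_def fun_eq_iff)
    moreover have "bij ti" unfolding ti_def using bt by (rule bij_imp_bij_inv)
    ultimately show ?thesis using bf by (simp add: bij_comp)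
  qed
  have bri: "bij ri" unfolding ri_def using br by (rule bij_imp_bij_inv)
  have k: "(\<lambda>x. fst (Si (x, x))) = (\<lambda>x. g x + \<sigma> x) \<circ> ri"
    by (simp add: Si_def g_def fun_eq_iff r1)
  have d3: "bij (\<lambda>x. fst (inv S (x, x)))" unfolding iS k using bpi bri by (simp add: bij_comp)
  have d4: "bij (\<lambda>x. snd (inv S (x, x)))" unfolding iS using bri by (simp add: Si_def)
  have yb: "yang_baxter B"
    unfolding yang_baxter_def B_Id_def Id_B_def B_def
  proof (rule ext, clarsimp)
    fix x y z
    have "\<tau> (\<sigma> y) + \<sigma> x = \<tau> (\<sigma> (\<rho> x)) + \<sigma> (\<tau> y) + \<sigma> (\<sigma> x)" using assms(6) by blast
    then show "\<tau> (\<tau> z + \<sigma> (\<rho> x)) + \<sigma> (\<tau> y + \<sigma> x) = \<tau> (\<tau> z + \<sigma> y) + \<sigma> x \<and>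
       \<rho> (\<tau> y + \<sigma> x) = \<tau> (\<rho> y) + \<sigma> (\<rho> x)"
      using ht hs hr unfolding group_hom_def by (simp add: add.assoc rt rs)
  qed
  have kk: "kink B = (\<lambda>x. \<tau> (\<rho> x) + \<sigma> x)"
  proof -
    have "inv (\<lambda>x. snd (inv S (x, x))) = \<rho>"
      unfolding iS Si_def by (simp add: inv_by_inv[OF r1 r2])
    thus ?thesis unfolding kink_def Let_def sw iS by (simp add: Si_def fun_eq_iff r2)
  qed
  have si: "strongly_invertible B"
    unfolding strongly_invertible_def Let_def sw using bB ex1 d1 d2 d3 d4 by blast
  have "birack B" unfolding birack_def using si yb by blast
  with kk have "birack B \<and> kink B = (\<lambda>x. \<tau> (\<rho> x) + \<sigma> x)" by blast
  thus ?thesis unfolding B_def .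
qed

end
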